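(* Let $m\ge1$, $n=2^m-1$ and $\iota,\kappa\in\dot F^m$. Every element $\bar c$ of the linear span $\langle R_\iota,R_\kappa\rangle$ of $R_\iota\cup R_\kappa$ satisfies $$c_\alpha+c_{\alpha+\iota}+c_{\alpha+\kappa}+c_{\alpha+\iota+\kappa}=0 \quad\text{for all } \alpha\in F^m\setminus\langle\iota,\kappa\rangle,$$ where $\langle\iota,\kappa\rangle$ is the linear span of $\iota,\kappa$ in $F^m$.
   Context: $F^m$ denotes the vector space of binary $m$-tuples over $GF(2)$, and $\dot F^m := F^m\setminus\{0^m\}$. The coordinates of words $\bar c\in F^n$ ($n=2^m-1$) are indexed by the elements of $\dot F^m$, $\bar c=\{c_\alpha\}_{\alpha\in\dot F^m}$. The Hamming code is $H:=\{\bar c\in F^n \mid \sum_{\alpha\in\dot F^m} c_\alpha\alpha = 0^m\}$. For $\iota\in\dot F^m$, $R_\iota := \{\bar c\in H \mid c_\alpha=c_{\alpha+\iota} \text{ for all } \alpha\in F^m\setminus\{0^m,\iota\}\}$; it is a linear subspace of $F^n$. *)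

theory Defs
  imports "HOL-Analysis.Analysis" "HOL-Library.Z2"
begin

text \<open>F^m is modelled as bit ^ 'm (m = CARD('m) >= 1). A word of F^n, n = 2^m - 1,
  indexed by the nonzero vectors, is a vector c :: bit ^ (bit ^ 'm) whose coordinate
  at 0 is 0 (that coordinate does not exist in F^n; the words form a subspace).\<close>

instance bit :: finite
proof
  have "(UNIV :: bit set) = {0, 1}" by (auto intro: bit_not_zero_iff[THEN iffD1])
  then show "finite (UNIV :: bit set)" by (metis finite.emptyI finite_insert)
qed

type_synonym 'm word = "bit ^ (bit ^ 'm)"

definition words :: "'m::finite word set" where
  "words = {c. c $ 0 = 0}"

definition hamming :: "'m::finite word set" where
  "hamming = {c \<in> words. (\<Sum>\<alpha>\<in>UNIV - {0}. (c $ \<alpha>) *s \<alpha>) = 0}"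

definition R :: "bit ^ 'm \<Rightarrow> 'm::finite word set" where
  "R \<iota> = {c \<in> hamming. \<forall>\<alpha>. \<alpha> \<noteq> 0 \<and> \<alpha> \<noteq> \<iota> \<longrightarrow> c $ \<alpha> = c $ (\<alpha> + \<iota>)}"

end

theory Submission
  imports Defs
begin

lemma bit_add_self: "(x::bit) + x = 0"
  by (cases x) auto

lemma vec_add_self: "(x::bit^'n) + x = 0"
  by (simp add: vec_eq_iff bit_add_self)

lemma vec_add_eq: "(a::bit^'n) + b = 0 \<longleftrightarrow> a = b"
  by (metis add.assoc add.right_neutral vec_add_self)

lemma vec_add_eq2: "(a::bit^'n) + b = c \<longleftrightarrow> a = c + b"
  by (metis add.assoc add.right_neutral vec_add_self)

theorem lemma2:
  fixes \<iota> \<kappa> :: "bit ^ 'm::finite" and c :: "'m word" and \<alpha> :: "bit ^ 'm"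
  assumes "\<iota> \<noteq> 0" and "\<kappa> \<noteq> 0"
    and "c \<in> module.span (*s) (R \<iota> \<union> R \<kappa>)"
    and "\<alpha> \<notin> module.span (*s) {\<iota>, \<kappa>}"
  shows "c $ \<alpha> + c $ (\<alpha> + \<iota>) + c $ (\<alpha> + \<kappa>) + c $ (\<alpha> + \<iota> + \<kappa>) = 0"
proof -
  have si: "\<iota> \<in> vec.span {\<iota>, \<kappa>}" and sk: "\<kappa> \<in> vec.span {\<iota>, \<kappa>}"
    by (auto intro: vec.span_base)
  have s0: "0 \<in> vec.span {\<iota>, \<kappa>}" by (rule vec.span_zero)
  have sik: "\<iota> + \<kappa> \<in> vec.span {\<iota>, \<kappa>}" by (rule vec.span_add[OF si sk])
  have a0: "\<alpha> \<noteq> 0" "\<alpha> \<noteq> \<iota>" "\<alpha> \<noteq> \<kappa>" "\<alpha> \<noteq> \<iota> + \<kappa>"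
    using assms(4) si sk s0 sik by auto
  have ne: "\<alpha> + \<iota> \<noteq> 0" "\<alpha> + \<kappa> \<noteq> 0" "\<alpha> + \<iota> \<noteq> \<kappa>" "\<alpha> + \<kappa> \<noteq> \<iota>"
    using a0 by (auto simp: vec_add_eq vec_add_eq2 add.commute)
  let ?P = "\<lambda>c::'m word. c $ \<alpha> + c $ (\<alpha> + \<iota>) + c $ (\<alpha> + \<kappa>) + c $ (\<alpha> + \<iota> + \<kappa>) = 0"
  have sub: "vec.subspace (Collect ?P)"
  proof (rule vec.subspaceI)
    show "0 \<in> Collect ?P" by simp
  next
    fix x y assume "x \<in> Collect ?P" "y \<in> Collect ?P"
    moreover have "(x + y) $ \<alpha> + (x + y) $ (\<alpha> + \<iota>) + (x + y) $ (\<alpha> + \<kappa>) + (x + y) $ (\<alpha> + \<iota> + \<kappa>)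
      = (x $ \<alpha> + x $ (\<alpha> + \<iota>) + x $ (\<alpha> + \<kappa>) + x $ (\<alpha> + \<iota> + \<kappa>))
      + (y $ \<alpha> + y $ (\<alpha> + \<iota>) + y $ (\<alpha> + \<kappa>) + y $ (\<alpha> + \<iota> + \<kappa>))"
      by (simp only: vector_add_component ac_simps)
    ultimately show "x + y \<in> Collect ?P" by simp
  next
    fix r x assume "x \<in> Collect ?P"
    moreover have "(r *s x) $ \<alpha> + (r *s x) $ (\<alpha> + \<iota>) + (r *s x) $ (\<alpha> + \<kappa>) + (r *s x) $ (\<alpha> + \<iota> + \<kappa>)
      = r * (x $ \<alpha> + x $ (\<alpha> + \<iota>) + x $ (\<alpha> + \<kappa>) + x $ (\<alpha> + \<iota> + \<kappa>))"
      by (simp only: vector_scalar_mult_def vec_lambda_beta distrib_left)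
    ultimately show "r *s x \<in> Collect ?P" by simp
  qed
  have base: "?P x" if "x \<in> R \<iota> \<union> R \<kappa>" for x
  proof (cases "x \<in> R \<iota>")
    case True
    then have h: "\<And>\<beta>. \<beta> \<noteq> 0 \<Longrightarrow> \<beta> \<noteq> \<iota> \<Longrightarrow> x $ \<beta> = x $ (\<beta> + \<iota>)" by (auto simp: R_def)
    have "x $ \<alpha> = x $ (\<alpha> + \<iota>)" using h a0 by auto
    moreover have "x $ (\<alpha> + \<kappa>) = x $ (\<alpha> + \<iota> + \<kappa>)"
      using h[of "\<alpha> + \<kappa>"] ne by (simp add: add.commute add.left_commute)
    ultimately show ?thesis by (simp add: bit_add_self add.assoc)
  next
    case False
    then have "x \<in> R \<kappa>" using that by auto
    then have h: "\<And>\<beta>. \<beta> \<noteq> 0 \<Longrightarrow> \<beta> \<noteq> \<kappa> \<Longrightarrow> x $ \<beta> = x $ (\<beta> + \<kappa>)" by (auto simp: R_def)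
    have e1: "x $ \<alpha> = x $ (\<alpha> + \<kappa>)" using h a0 by auto
    have e2: "x $ (\<alpha> + \<iota>) = x $ (\<alpha> + \<iota> + \<kappa>)"
      using h[of "\<alpha> + \<iota>"] ne by simp
    have "x $ \<alpha> + x $ (\<alpha> + \<iota>) + x $ (\<alpha> + \<kappa>) + x $ (\<alpha> + \<iota> + \<kappa>)
       = (x $ (\<alpha> + \<kappa>) + x $ (\<alpha> + \<kappa>)) + (x $ (\<alpha> + \<iota> + \<kappa>) + x $ (\<alpha> + \<iota> + \<kappa>))"
      unfolding e1 e2 by (simp only: ac_simps)
    then show ?thesis by (simp add: bit_add_self)
  qed
  show ?thesis
    using vec.span_induct[OF assms(3) sub] base by blast
qed

end
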